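(* Let $\sigma$ be a completely erasing $k$-block substitution that satisfies the optimality condition. Let $w\in\{0,1\}^*$, $h\in\mathbb N$ and $p=\sigma^h(w)\in\{0,1\}^*$. Then for every $u\in\{0,1\}^\omega$ there is $v\in\{0,1\}^\omega$ such that $\sigma^h(wv)=pu$.
   Context: Binary words: $\{0,1\}^*$ and $\{0,1\}^\omega$ denote finite and infinite binary words, and $\epsilon$ is the empty word. Fix $k\ge2$. An erasing $k$-block substitution is a map $\sigma:\{0,1\}^k\to\{0,1\}^*$ with exactly one block $w_\epsilon$ such that $\sigma(w_\epsilon)=\epsilon$. $\sigma$ is alternating if there are $\sigma_1,\dots,\sigma_k:\{0,1\}\to\{0,1\}^*$ with $\sigma(b_1\cdots b_k)=\sigma_1(b_1)\cdots\sigma_k(b_k)$. It is then extended to all finite or infinite words by $\sigma(u)=\prod_j\sigma_{((j-1)\bmod k)+1}(u_j)$, and iterates $\sigma^h$ are computed with this extension. $\sigma$ is completely erasing if it is erasing and alternating, and every $w\in\{0,1\}^*$ satisfies $\sigma^n(w)=\epsilon$ for some $n\in\mathbb N$. Optimality condition: every $w\in\{0,1\}^\omega$ can be written as $w=\prod_{i\ge1}\sigma(b_i)$ with blocks $b_i\in\{0,1\}^k$ satisfying $\sigma(b_i)\ne\epsilon$. *)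

theory Defs
  imports Main
begin

(* An alternating k-block substitution is given by sig :: nat => bool => bool list,
   where sig i (0-based, i < k) is sigma_{i+1}. *)

definition blk_app :: "(nat \<Rightarrow> bool \<Rightarrow> bool list) \<Rightarrow> nat \<Rightarrow> bool list \<Rightarrow> bool list" where
  "blk_app sig k u = concat (map (\<lambda>j. sig (j mod k) (u ! j)) [0..<length u])"

type_synonym word = "bool list + (nat \<Rightarrow> bool)"

definition cat_inf :: "bool list \<Rightarrow> (nat \<Rightarrow> bool) \<Rightarrow> (nat \<Rightarrow> bool)" where
  "cat_inf w v = (\<lambda>i. if i < length w then w ! i else v (i - length w))"

(* image of an infinite word: the infinite product of the images of its letters,
   which is an infinite word if the partial images are unbounded in length, and
   otherwise the (eventually constant) finite partial image *)
definition omega_app :: "(nat \<Rightarrow> bool \<Rightarrow> bool list) \<Rightarrow> nat \<Rightarrow> (nat \<Rightarrow> bool) \<Rightarrow> word" where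
  "omega_app sig k x =
     (let pre = (\<lambda>n. blk_app sig k (map x [0..<n])) in
      if (\<forall>L. \<exists>n. L < length (pre n))
      then Inr (\<lambda>i. pre (LEAST n. i < length (pre n)) ! i)
      else Inl (pre (LEAST n. \<forall>m\<ge>n. pre m = pre n)))"

definition word_app :: "(nat \<Rightarrow> bool \<Rightarrow> bool list) \<Rightarrow> nat \<Rightarrow> word \<Rightarrow> word" where
  "word_app sig k z = (case z of Inl u \<Rightarrow> Inl (blk_app sig k u) | Inr x \<Rightarrow> omega_app sig k x)"

definition erasing :: "(nat \<Rightarrow> bool \<Rightarrow> bool list) \<Rightarrow> nat \<Rightarrow> bool" where
  "erasing sig k \<longleftrightarrow> (\<exists>!b. length b = k \<and> blk_app sig k b = [])"

definition completely_erasing :: "(nat \<Rightarrow> bool \<Rightarrow> bool list) \<Rightarrow> nat \<Rightarrow> bool" where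
  "completely_erasing sig k \<longleftrightarrow> erasing sig k \<and>
     (\<forall>w. \<exists>n. (blk_app sig k ^^ n) w = [])"

definition optimal :: "(nat \<Rightarrow> bool \<Rightarrow> bool list) \<Rightarrow> nat \<Rightarrow> bool" where
  "optimal sig k \<longleftrightarrow> (\<forall>w :: nat \<Rightarrow> bool. \<exists>b :: nat \<Rightarrow> bool list.
      (\<forall>i. length (b i) = k \<and> blk_app sig k (b i) \<noteq> []) \<and>
      (\<forall>n. let q = concat (map (\<lambda>i. blk_app sig k (b i)) [0..<n])
           in q = map w [0..<length q]))"

end

theory Submission imports Defs begin

lemma blk_map: "blk_app sig k (map x [0..<n]) = concat (map (\<lambda>j. sig (j mod k) (x j)) [0..<n])"
  unfolding blk_app_def by (auto intro!: arg_cong[where f=concat] map_cong)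

lemma omega_lemma:
  assumes "\<And>n. blk_app sig k (map x [0..<n]) = map z [0..<length (blk_app sig k (map x [0..<n]))]"
    and "\<And>L. \<exists>n. L < length (blk_app sig k (map x [0..<n]))"
  shows "omega_app sig k x = Inr z"
proof -
  have "(\<lambda>i. blk_app sig k (map x [0..<(LEAST n. i < length (blk_app sig k (map x [0..<n])))]) ! i) = z"
  proof
    fix i
    define n where "n = (LEAST n. i < length (blk_app sig k (map x [0..<n])))"
    have "i < length (blk_app sig k (map x [0..<n]))"
      unfolding n_def by (rule LeastI_ex) (rule assms(2))
    then show "blk_app sig k (map x [0..<(LEAST n. i < length (blk_app sig k (map x [0..<n])))]) ! i = z i"
      unfolding n_def[symmetric] by (subst assms(1)) simp
  qed
  then show ?thesis unfolding omega_app_def Let_def using assms(2) by simp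
qed

lemma map_cat: "map (cat_inf P u) [0..<length P + n] = P @ map u [0..<n]"
  by (rule nth_equalityI) (auto simp: cat_inf_def nth_append)

lemma key:
  assumes k: "0 < k" and e: "\<And>i. sig (i mod k) (e i) = []" and opt: "optimal sig k"
  shows "\<exists>u'. omega_app sig k (cat_inf p u') = Inr (cat_inf (blk_app sig k p) u)"
proof -
  obtain b where b: "\<forall>i. length (b i) = k \<and> blk_app sig k (b i) \<noteq> []"
    and pref: "\<forall>n. let q = concat (map (\<lambda>i. blk_app sig k (b i)) [0..<n]) in q = map u [0..<length q]"
    using opt unfolding optimal_def by blast
  define r where "r = length p"
  define N0 where "N0 = k * r"
  define x where "x n = b (n div k) ! (n mod k)" for n
  define u' where "u' j = (if j < N0 - r then e (r + j) else x (j - (N0 - r)))" for j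
  define y where "y = cat_inf p u'"
  define f where "f j = sig (j mod k) (y j)" for j
  define S where "S n = concat (map f [0..<n])" for n
  define P where "P = blk_app sig k p"
  define z where "z = cat_inf P u"
  define Q where "Q M = concat (map (\<lambda>i. blk_app sig k (b i)) [0..<M])" for M
  have rN: "r \<le> N0" unfolding N0_def using k by (simp add: Suc_leI)
  have S_app: "S m = S n @ concat (map f [n..<m])" if "n \<le> m" for n m
  proof -
    define t where "t = m - n"
    have "m = n + t" using that unfolding t_def by simp
    then show ?thesis unfolding S_def using upt_add_eq_append[of 0 n t] by simp
  qed
  have S_r: "S r = P"
    unfolding S_def P_def blk_app_def r_def
    by (auto intro!: arg_cong[where f=concat] map_cong simp: f_def y_def cat_inf_def)
  have mid: "concat (map f [r..<N0]) = []"
  proof -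
    have "f j = []" if "r \<le> j" "j < N0" for j
    proof -
      have "y j = e j" using that unfolding y_def cat_inf_def u'_def r_def by auto
      then show ?thesis unfolding f_def using e by simp
    qed
    then show ?thesis by (simp add: concat_eq_Nil_conv)
  qed
  have S_N0: "S N0 = P" using S_app[OF rN] S_r mid by simp
  have blocks: "concat (map f [N0..<N0+k*M]) = Q M" for M
  proof (induction M)
    case 0
    then show ?case by (simp add: Q_def)
  next
    case (Suc M)
    define a where "a = N0 + k * M"
    have eq: "N0 + k * Suc M = a + k" unfolding a_def by simp
    have "concat (map f [a..<a+k]) = blk_app sig k (b M)"
    proof -
      have "[a..<a+k] = map (\<lambda>j. j + a) [0..<k]" by (simp add: map_add_upt add.commute)
      have fj: "f (j + a) = sig (j mod k) (b M ! j)" if "j < k" for j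
      proof -
        have a2: "j + a = j + k * (r + M)" unfolding a_def N0_def by (simp add: distrib_left)
        have m: "(j + a) mod k = j mod k" unfolding a2 by simp
        have ge: "\<not> (j + a < length p)" using rN unfolding a_def r_def by simp
        have "y (j + a) = u' (j + a - r)" unfolding y_def cat_inf_def r_def using ge by simp
        also have "\<dots> = x (j + a - r - (N0 - r))"
        proof -
          have "\<not> (j + a - r < N0 - r)" using rN unfolding a_def by linarith
          then show ?thesis unfolding u'_def by simp
        qed
        also have "j + a - r - (N0 - r) = j + k * M" unfolding a_def using rN by simp
        also have "x (j + k * M) = b M ! j" unfolding x_def using that k by simp
        finally show ?thesis unfolding f_def m by simp
      qed
      have lb: "length (b M) = k" using b by blast
      have "map f [a..<a+k] = map (\<lambda>j. sig (j mod k) (b M ! j)) [0..<k]"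
        unfolding \<open>[a..<a+k] = _\<close> map_map o_def
        using \<open>\<And>j. j < k \<Longrightarrow> f (j + a) = _\<close> by (intro map_cong) auto
      then show ?thesis unfolding blk_app_def lb by simp
    qed
    have sp: "[N0..<a+k] = [N0..<a] @ [a..<a+k]"
      using upt_add_eq_append[of N0 a k] unfolding a_def by simp
    have "concat (map f [N0..<a]) = Q M" using Suc.IH unfolding a_def .
    then show ?case unfolding eq sp using \<open>concat (map f [a..<a+k]) = _\<close>
      by (simp add: Q_def)
  qed
  have qpref: "Q M = map u [0..<length (Q M)]" for M
    using pref unfolding Q_def Let_def by blast
  have qlen: "M \<le> length (Q M)" for M
  proof (induction M)
    case 0 then show ?case by simp
  next
    case (Suc M)
    have "blk_app sig k (b M) \<noteq> []" using b by blast
    then have "length (blk_app sig k (b M)) \<ge> 1" by (cases "blk_app sig k (b M)") auto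
    then show ?case using Suc.IH by (simp add: Q_def)
  qed
  have SM: "S (N0 + k * M) = P @ Q M" for M
    using S_app[of N0 "N0 + k*M"] S_N0 blocks by simp
  have Sbig: "S (N0 + k * M) = map z [0..<length (S (N0 + k * M))]" for M
  proof -
    have "map z [0..<length (S (N0 + k * M))] = P @ map u [0..<length (Q M)]"
      unfolding SM z_def by (simp add: map_cat)
    then show ?thesis using SM qpref by metis
  qed
  have Sall: "S n = map z [0..<length (S n)]" for n
  proof -
    define m where "m = N0 + k * n"
    have "n \<le> k * n" using k by (simp add: Suc_leI)
    then have nm: "n \<le> m" unfolding m_def by linarith
    have "S n = take (length (S n)) (S m)" using S_app[OF nm] by simp
    also have "\<dots> = take (length (S n)) (map z [0..<length (S m)])"
      using Sbig m_def by metis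
    also have "\<dots> = map z [0..<length (S n)]"
      using S_app[OF nm] by (simp add: take_map)
    finally show ?thesis .
  qed
  have unb: "\<exists>n. L < length (S n)" for L
  proof -
    have "Suc L \<le> length (S (N0 + k * Suc L))" unfolding SM using qlen[of "Suc L"] by simp
    then show ?thesis by (metis Suc_le_eq)
  qed
  have bm: "blk_app sig k (map y [0..<n]) = S n" for n
    unfolding blk_map S_def f_def ..
  have "omega_app sig k y = Inr z"
  proof (rule omega_lemma)
    fix n show "blk_app sig k (map y [0..<n]) = map z [0..<length (blk_app sig k (map y [0..<n]))]"
      unfolding bm by (rule Sall)
  next
    fix L show "\<exists>n. L < length (blk_app sig k (map y [0..<n]))" unfolding bm by (rule unb)
  qed
  then show ?thesis unfolding y_def z_def P_def by blast
qed

lemma gen: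
  assumes k: "0 < k" and e: "\<And>i. sig (i mod k) (e i) = []" and opt: "optimal sig k"
  shows "\<forall>u. \<exists>v. (word_app sig k ^^ h) (Inr (cat_inf w v)) = Inr (cat_inf ((blk_app sig k ^^ h) w) u)"
proof (induction h)
  case 0
  then show ?case by auto
next
  case (Suc h)
  show ?case
  proof
    fix u
    obtain u' where u': "omega_app sig k (cat_inf ((blk_app sig k ^^ h) w) u') =
        Inr (cat_inf (blk_app sig k ((blk_app sig k ^^ h) w)) u)"
      using key[OF k e opt] by blast
    obtain v where v: "(word_app sig k ^^ h) (Inr (cat_inf w v)) = Inr (cat_inf ((blk_app sig k ^^ h) w) u')"
      using Suc.IH by blast
    have "(word_app sig k ^^ Suc h) (Inr (cat_inf w v)) = Inr (cat_inf ((blk_app sig k ^^ Suc h) w) u)"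
      using v u' by (simp add: word_app_def)
    then show "\<exists>v. (word_app sig k ^^ Suc h) (Inr (cat_inf w v)) = Inr (cat_inf ((blk_app sig k ^^ Suc h) w) u)"
      by blast
  qed
qed

theorem lemma4p5:
  fixes sig :: "nat \<Rightarrow> bool \<Rightarrow> bool list" and k h :: nat and w p :: "bool list"
  assumes "k \<ge> 2"
    and "completely_erasing sig k"
    and "optimal sig k"
    and "p = (blk_app sig k ^^ h) w"
  shows "\<forall>u :: nat \<Rightarrow> bool. \<exists>v :: nat \<Rightarrow> bool.
           (word_app sig k ^^ h) (Inr (cat_inf w v)) = Inr (cat_inf p u)"
proof -
  have k: "0 < k" using assms(1) by simp
  obtain eb where eb: "length eb = k" "blk_app sig k eb = []"
    using assms(2) unfolding completely_erasing_def erasing_def by blast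
  define e where "e i = eb ! (i mod k)" for i
  have e: "sig (i mod k) (e i) = []" for i
  proof -
    have lt: "i mod k < k" using k by simp
    have "concat (map (\<lambda>j. sig (j mod k) (eb ! j)) [0..<k]) = []"
      using eb unfolding blk_app_def by simp
    then have "sig (i mod k mod k) (eb ! (i mod k)) = []"
      using lt by (simp add: concat_eq_Nil_conv)
    then show ?thesis unfolding e_def by simp
  qed
  show ?thesis using gen[OF k e assms(3)] assms(4) by simp
qed

end
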